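(* Let $\mathcal{M}$ be a rich set of quantum measurements, and let $\succeq$ be a likelihood ordering on $\mathcal{M}$ that is minimally rational and satisfies equivalence. Then $\succeq$ is uniquely represented by the function $\Pr(E\mid M)=\mathcal{W}_M(E)$ (for $M\in\mathcal{M}$, $E\subseteq\mathcal{S}_M$); that is, this function represents $\succeq$, and it is the only function that does.
   Context: A quantum measurement $M$ consists of: a Hilbert space $\mathcal{H}$; a normalised vector $|\psi\rangle\in\mathcal{H}$; a self-adjoint operator $\hat X$ on $\mathcal{H}$ with discrete spectrum $\sigma(\hat X)$, with $\hat P_X(x)$ the projection onto the eigenspace of eigenvalue $x$; a set $\mathcal{S}_M$ (the possible outcomes, or state space) whose subsets are called events; and a function $\mathcal{C}:\mathcal{S}_M\to\sigma(\hat X)$ onto $\sigma(\hat X)$, with $\mathcal{C}(E)=\{\mathcal{C}(s): s\in E\}$. The weight of an event $E\subseteq\mathcal{S}_M$ is $\mathcal{W}_M(E)=\sum_{x\in\mathcal{C}(E)}\langle\psi|\hat P_X(x)|\psi\rangle$. A set $\mathcal{M}$ of quantum measurements is rich if for every $n$ and all positive reals $w_1,\dots,w_n$ with $\sum_{i=1}^n w_i=1$, $\mathcal{M}$ contains a measurement with exactly $n$ outcomes whose singleton events have weights $w_1,\dots,w_n$. A likelihood ordering on $\mathcal{M}$ is a binary relation $\succeq$ on the pairs $\langle E,M\rangle$ with $M\in\mathcal{M}$ and $E\subseteq\mathcal{S}_M$, written $E|M\succeq F|N$. Write $E|M\simeq F|N$ if $E|M\succeq F|N$ and $F|N\succeq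 E|M$. $E|M$ is null if $E|M\simeq\emptyset|M$. The ordering is minimally rational if: (Transitivity) $E|M\succeq F|N$ and $F|N\succeq G|O$ imply $E|M\succeq G|O$; (Separation) there exist $M$ and $E$ with $E|M$ not null; (Dominance) if $E\subseteq F\subseteq\mathcal{S}_M$ then $F|M\succeq E|M$, and $F|M\simeq E|M$ iff $(F\setminus E)|M$ is null. The ordering satisfies equivalence if $\mathcal{W}_M(E)=\mathcal{W}_N(F)$ implies $E|M\simeq F|N$. A function $\Pr$ assigning a real number $\Pr(E|M)$ to each pair represents $\succeq$ if: $\Pr(\emptyset|M)=0$ and $\Pr(\mathcal{S}_M|M)=1$ for all $M$; $\Pr(E\cup F|M)=\Pr(E|M)+\Pr(F|M)$ for disjoint $E,F\subseteq\mathcal{S}_M$; and $\Pr(E|M)\ge\Pr(F|N)$ iff $E|M\succeq F|N$. It is uniquely represented if exactly one such function exists. *)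

theory Defs
  imports "HOL-Analysis.Analysis"
begin

text \<open>Complex vector spaces with a complex inner product (physics convention:
  antilinear in the first argument, linear in the second).  Hilbert spaces of
  individual measurements are closed complex subspaces of an ambient complete
  complex inner product space of type 'h.\<close>

class cvector = real_vector +
  fixes scaleC :: "complex \<Rightarrow> 'a \<Rightarrow> 'a"
  assumes scaleC_add_right: "scaleC a (x + y) = scaleC a x + scaleC a y"
    and scaleC_add_left: "scaleC (a + b) x = scaleC a x + scaleC b x"
    and scaleC_scaleC: "scaleC a (scaleC b x) = scaleC (a * b) x"
    and scaleC_one: "scaleC 1 x = x"
    and scaleR_scaleC: "scaleR r x = scaleC (complex_of_real r) x"

class cinner_space = cvector + real_normed_vector +
  fixes cinner :: "'a \<Rightarrow> 'a \<Rightarrow> complex"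
  assumes cinner_commute: "cinner x y = cnj (cinner y x)"
    and cinner_add_right: "cinner x (y + z) = cinner x y + cinner x z"
    and cinner_scaleC_right: "cinner x (scaleC c y) = c * cinner x y"
    and cinner_nonneg: "Im (cinner x x) = 0 \<and> 0 \<le> Re (cinner x x)"
    and cinner_eq_zero_iff: "cinner x x = 0 \<longleftrightarrow> x = 0"
    and norm_eq_sqrt_cinner: "norm x = sqrt (Re (cinner x x))"

definition csubspace :: "'h::cinner_space set \<Rightarrow> bool" where
  "csubspace K \<longleftrightarrow> 0 \<in> K \<and> (\<forall>x\<in>K. \<forall>y\<in>K. x + y \<in> K) \<and> (\<forall>c. \<forall>x\<in>K. scaleC c x \<in> K)"

definition hilbert_subspace :: "'h::{cinner_space,complete_space} set \<Rightarrow> bool" where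
  "hilbert_subspace K \<longleftrightarrow> csubspace K \<and> closed K"

definition cspan :: "'h::cinner_space set \<Rightarrow> 'h set" where
  "cspan A = {y. \<exists>F c. finite F \<and> F \<subseteq> A \<and> y = (\<Sum>v\<in>F. scaleC (c v) v)}"

definition proj :: "'h::cinner_space set \<Rightarrow> 'h \<Rightarrow> 'h" where
  "proj K v = (THE k. k \<in> K \<and> (\<forall>u\<in>K. cinner u (v - k) = 0))"

definition self_adjoint :: "'h::cinner_space set \<Rightarrow> 'h set \<Rightarrow> ('h \<Rightarrow> 'h) \<Rightarrow> bool" where
  "self_adjoint H D X \<longleftrightarrow>
     csubspace D \<and> D \<subseteq> H \<and> H \<subseteq> closure D \<and> X ` D \<subseteq> H \<and>
     (\<forall>u\<in>D. \<forall>v\<in>D. X (u + v) = X u + X v) \<and>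
     (\<forall>c. \<forall>u\<in>D. X (scaleC c u) = scaleC c (X u)) \<and>
     (\<forall>u\<in>D. \<forall>v\<in>D. cinner (X u) v = cinner u (X v)) \<and>
     (\<forall>v\<in>H. (\<exists>w\<in>H. \<forall>u\<in>D. cinner (X u) v = cinner u w) \<longrightarrow> v \<in> D)"

definition eigenspace :: "'h::cinner_space set \<Rightarrow> ('h \<Rightarrow> 'h) \<Rightarrow> real \<Rightarrow> 'h set" where
  "eigenspace D X x = {v \<in> D. X v = scaleC (complex_of_real x) v}"

text \<open>Spectrum of an operator with discrete (pure point) spectrum: its eigenvalues.\<close>
definition point_spectrum :: "'h::cinner_space set \<Rightarrow> ('h \<Rightarrow> 'h) \<Rightarrow> real set" where
  "point_spectrum D X = {x. eigenspace D X x \<noteq> {0}}"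

definition discrete_spectrum :: "'h::cinner_space set \<Rightarrow> 'h set \<Rightarrow> ('h \<Rightarrow> 'h) \<Rightarrow> bool" where
  "discrete_spectrum H D X \<longleftrightarrow>
     H \<subseteq> closure (cspan (\<Union>x\<in>point_spectrum D X. eigenspace D X x))"

record ('h, 's) qmeas =
  hspace :: "'h set"
  state :: "'h"
  odom :: "'h set"
  obs :: "'h \<Rightarrow> 'h"
  outcomes :: "'s set"
  cg :: "'s \<Rightarrow> real"

definition spec :: "('h::cinner_space, 's) qmeas \<Rightarrow> real set" where
  "spec M = point_spectrum (odom M) (obs M)"

definition Pproj :: "('h::cinner_space, 's) qmeas \<Rightarrow> real \<Rightarrow> 'h \<Rightarrow> 'h" where
  "Pproj M x = proj (eigenspace (odom M) (obs M) x)"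

definition quantum_measurement :: "('h::{cinner_space,complete_space}, 's) qmeas \<Rightarrow> bool" where
  "quantum_measurement M \<longleftrightarrow>
     hilbert_subspace (hspace M) \<and> state M \<in> hspace M \<and> norm (state M) = 1 \<and>
     self_adjoint (hspace M) (odom M) (obs M) \<and>
     discrete_spectrum (hspace M) (odom M) (obs M) \<and>
     cg M ` outcomes M = spec M"

definition weight :: "('h::cinner_space, 's) qmeas \<Rightarrow> 's set \<Rightarrow> real" where
  "weight M E = (\<Sum>\<^sub>\<infinity>x\<in>cg M ` E. Re (cinner (state M) (Pproj M x (state M))))"

definition rich :: "('h::{cinner_space,complete_space}, 's) qmeas set \<Rightarrow> bool" where
  "rich MM \<longleftrightarrow> (\<forall>n (w :: nat \<Rightarrow> real).
      (\<forall>i<n. 0 < w i) \<and> (\<Sum>i<n. w i) = 1 \<longrightarrow>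
      (\<exists>M\<in>MM. \<exists>f. bij_betw f {..<n} (outcomes M) \<and> (\<forall>i<n. weight M {f i} = w i)))"

text \<open>A likelihood ordering is a relation ge with  ge E M F N  meaning  E|M \<succeq> F|N;
  only pairs with M \<in> MM and E \<subseteq> S_M are relevant.\<close>

type_synonym ('h, 's) lordering = "'s set \<Rightarrow> ('h, 's) qmeas \<Rightarrow> 's set \<Rightarrow> ('h, 's) qmeas \<Rightarrow> bool"

definition lsim :: "('h, 's) lordering \<Rightarrow> 's set \<Rightarrow> ('h, 's) qmeas \<Rightarrow> 's set \<Rightarrow> ('h, 's) qmeas \<Rightarrow> bool" where
  "lsim ge E M F N \<longleftrightarrow> ge E M F N \<and> ge F N E M"

definition lnull :: "('h, 's) lordering \<Rightarrow> 's set \<Rightarrow> ('h, 's) qmeas \<Rightarrow> bool" where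
  "lnull ge E M \<longleftrightarrow> lsim ge E M {} M"

definition minimally_rational :: "('h, 's) qmeas set \<Rightarrow> ('h, 's) lordering \<Rightarrow> bool" where
  "minimally_rational MM ge \<longleftrightarrow>
     (\<forall>M\<in>MM. \<forall>N\<in>MM. \<forall>K\<in>MM. \<forall>E F G.
        E \<subseteq> outcomes M \<and> F \<subseteq> outcomes N \<and> G \<subseteq> outcomes K \<and>
        ge E M F N \<and> ge F N G K \<longrightarrow> ge E M G K) \<and>
     (\<exists>M\<in>MM. \<exists>E. E \<subseteq> outcomes M \<and> \<not> lnull ge E M) \<and>
     (\<forall>M\<in>MM. \<forall>E F. E \<subseteq> F \<and> F \<subseteq> outcomes M \<longrightarrow>
        ge F M E M \<and> (lsim ge F M E M \<longleftrightarrow> lnull ge (F - E) M))"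

definition satisfies_equivalence :: "('h::cinner_space, 's) qmeas set \<Rightarrow> ('h, 's) lordering \<Rightarrow> bool" where
  "satisfies_equivalence MM ge \<longleftrightarrow>
     (\<forall>M\<in>MM. \<forall>N\<in>MM. \<forall>E F. E \<subseteq> outcomes M \<and> F \<subseteq> outcomes N \<and>
        weight M E = weight N F \<longrightarrow> lsim ge E M F N)"

definition represents :: "('h, 's) qmeas set \<Rightarrow> ('h, 's) lordering \<Rightarrow> ('s set \<Rightarrow> ('h, 's) qmeas \<Rightarrow> real) \<Rightarrow> bool" where
  "represents MM ge Pr \<longleftrightarrow>
     (\<forall>M\<in>MM. Pr {} M = 0 \<and> Pr (outcomes M) M = 1) \<and>
     (\<forall>M\<in>MM. \<forall>E F. E \<subseteq> outcomes M \<and> F \<subseteq> outcomes M \<and> E \<inter> F = {} \<longrightarrow>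
        Pr (E \<union> F) M = Pr E M + Pr F M) \<and>
     (\<forall>M\<in>MM. \<forall>N\<in>MM. \<forall>E F. E \<subseteq> outcomes M \<and> F \<subseteq> outcomes N \<longrightarrow>
        (Pr E M \<ge> Pr F N \<longleftrightarrow> ge E M F N))"

definition uniquely_represents :: "('h, 's) qmeas set \<Rightarrow> ('h, 's) lordering \<Rightarrow> ('s set \<Rightarrow> ('h, 's) qmeas \<Rightarrow> real) \<Rightarrow> bool" where
  "uniquely_represents MM ge Pr \<longleftrightarrow> represents MM ge Pr \<and>
     (\<forall>Pr'. represents MM ge Pr' \<longrightarrow> (\<forall>M\<in>MM. \<forall>E. E \<subseteq> outcomes M \<longrightarrow> Pr' E M = Pr E M))"

end

theory Submission
  imports Defs
begin
lemma cinner_add_left: "cinner (x + y) (z::'a::cinner_space) = cinner x z + cinner y z"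
  by (metis cinner_commute cinner_add_right complex_cnj_add)

lemma cinner_scaleC_left: "cinner (scaleC c x) (y::'a::cinner_space) = cnj c * cinner x y"
  by (metis cinner_commute cinner_scaleC_right complex_cnj_mult complex_cnj_cnj)

lemma cinner_zero_right[simp]: "cinner x (0::'a::cinner_space) = 0"
  by (metis add_cancel_left_left cinner_add_right add_0)

lemma cinner_zero_left[simp]: "cinner (0::'a::cinner_space) x = 0"
  by (metis cinner_commute cinner_zero_right complex_cnj_zero)

lemma cinner_minus_right: "cinner x (- y::'a::cinner_space) = - cinner x y"
  by (metis add.right_inverse cinner_add_right cinner_zero_right eq_neg_iff_add_eq_0)

lemma cinner_minus_left: "cinner (- x) (y::'a::cinner_space) = - cinner x y"
  by (metis add.right_inverse cinner_add_left cinner_zero_left eq_neg_iff_add_eq_0)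

lemma cinner_diff_right: "cinner x (y - z::'a::cinner_space) = cinner x y - cinner x z"
  by (metis diff_conv_add_uminus cinner_add_right cinner_minus_right)

lemma cinner_diff_left: "cinner (x - y) (z::'a::cinner_space) = cinner x z - cinner y z"
  by (metis diff_conv_add_uminus cinner_add_left cinner_minus_left)

lemma cinner_sum_right: "cinner x (sum f A) = (\<Sum>a\<in>A. cinner (x::'a::cinner_space) (f a))"
  by (induction A rule: infinite_finite_induct) (auto simp: cinner_add_right)

lemma cinner_sum_left: "cinner (sum f A) x = (\<Sum>a\<in>A. cinner (f a) (x::'a::cinner_space))"
  by (induction A rule: infinite_finite_induct) (auto simp: cinner_add_left)

lemma scaleC_zero_left[simp]: "scaleC 0 (x::'a::cinner_space) = 0"
  by (metis scaleR_scaleC scaleR_zero_left of_real_0)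

lemma scaleC_zero_right[simp]: "scaleC c (0::'a::cinner_space) = 0"
  by (metis add_cancel_left_left scaleC_add_right add_0)

lemma cinner_self_real: "cinner x (x::'a::cinner_space) = complex_of_real (norm x ^ 2)"
proof -
  have "Im (cinner x x) = 0" "0 \<le> Re (cinner x x)" using cinner_nonneg by auto
  moreover have "norm x ^ 2 = Re (cinner x x)" using norm_eq_sqrt_cinner[of x] cinner_nonneg[of x]
    by simp
  ultimately show ?thesis by (simp add: complex_eq_iff)
qed

lemma norm_sq_cinner: "norm x ^ 2 = Re (cinner x (x::'a::cinner_space))"
  by (simp add: cinner_self_real)

lemma pythagoras:
  assumes "cinner x (y::'a::cinner_space) = 0"
  shows "norm (x + y) ^ 2 = norm x ^ 2 + norm y ^ 2"
proof -
  have "cinner y x = 0" using assms cinner_commute[of y x] by simp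
  then have "cinner (x+y) (x+y) = cinner x x + cinner y y"
    using assms by (simp add: cinner_add_left cinner_add_right)
  then show ?thesis by (simp add: norm_sq_cinner)
qed

lemma cauchy_schwarz: "cmod (cinner x y) \<le> norm x * norm (y::'a::cinner_space)"
proof (cases "y = 0")
  case True then show ?thesis by simp
next
  case False
  define a where "a = cinner x y"
  define r where "r = norm y ^ 2"
  define t where "t = cnj a / complex_of_real r"
  have ny: "norm y > 0" using False by simp
  then have r0: "r > 0" by (simp add: r_def)
  have ct: "cnj t = a / complex_of_real r" by (simp add: t_def)
  have aa: "a * cnj a = complex_of_real (cmod a ^ 2)" by (metis complex_norm_square)
  have "0 \<le> norm (x - scaleC t y) ^ 2" by simp
  also have "\<dots> = Re (cinner (x - scaleC t y) (x - scaleC t y))" by (rule norm_sq_cinner)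
  also have "cinner (x - scaleC t y) (x - scaleC t y) =
     cinner x x - t * cinner x y - cnj t * cinner y x + cnj t * t * cinner y y"
    by (simp add: cinner_diff_left cinner_diff_right cinner_scaleC_left cinner_scaleC_right algebra_simps)
  also have "\<dots> = complex_of_real (norm x ^ 2) - t * a - cnj t * cnj a + cnj t * t * complex_of_real r"
    by (simp add: cinner_self_real a_def cinner_commute[of y x] r_def)
  also have "\<dots> = complex_of_real (norm x ^ 2) - (a * cnj a) / complex_of_real r"
    unfolding ct using r0 by (simp add: t_def field_simps)
  also have "\<dots> = complex_of_real (norm x ^ 2 - cmod a ^ 2 / r)"
    unfolding aa by simp
  finally have "0 \<le> norm x ^ 2 - cmod a ^ 2 / r"
    by (simp only: Re_complex_of_real)
  then have "cmod a ^ 2 \<le> (norm x * norm y) ^ 2" using r0 by (simp add: field_simps power_mult_distrib r_def)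
  then have "cmod a ^ 2 \<le> (norm x * norm y) ^ 2" using ny by (simp add: field_simps power_mult_distrib)
  then show ?thesis unfolding a_def
    by (meson mult_nonneg_nonneg norm_ge_zero power2_le_imp_le)
qed

lemma tendsto_cinner_right:
  assumes "f \<longlonglongrightarrow> (v::'a::cinner_space)"
  shows "(\<lambda>n. cinner u (f n)) \<longlonglongrightarrow> cinner u v"
proof -
  have "(\<lambda>n. norm (f n - v)) \<longlonglongrightarrow> 0" using assms
    using LIM_zero tendsto_norm_zero by blast
  then have "(\<lambda>n. norm u * norm (f n - v)) \<longlonglongrightarrow> 0"
    using tendsto_mult_right_zero by blast
  moreover have "norm (cinner u (f n) - cinner u v) \<le> norm u * norm (f n - v)" for n
    using cauchy_schwarz[of u "f n - v"] by (simp add: cinner_diff_right)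
  ultimately have "(\<lambda>n. cinner u (f n) - cinner u v) \<longlonglongrightarrow> 0"
    using Lim_null_comparison[of "\<lambda>n. cinner u (f n) - cinner u v" "\<lambda>n. norm u * norm (f n - v)" sequentially]
    by (simp add: always_eventually)
  then show ?thesis by (simp add: LIM_zero_iff)
qed

lemma tendsto_cinner_left:
  assumes "f \<longlonglongrightarrow> (v::'a::cinner_space)"
  shows "(\<lambda>n. cinner (f n) u) \<longlonglongrightarrow> cinner v u"
proof -
  have "(\<lambda>n. cnj (cinner u (f n))) \<longlonglongrightarrow> cnj (cinner u v)"
    using tendsto_cinner_right[OF assms] tendsto_cnj by blast
  moreover have "(\<lambda>n. cinner (f n) u) = (\<lambda>n. cnj (cinner u (f n)))"
    by (rule ext) (rule cinner_commute)
  moreover have "cinner v u = cnj (cinner u v)" by (rule cinner_commute)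
  ultimately show ?thesis by simp
qed

lemma csub_diff: "csubspace K \<Longrightarrow> x \<in> K \<Longrightarrow> y \<in> K \<Longrightarrow> x - (y::'a::cinner_space) \<in> K"
  unfolding csubspace_def
  by (metis diff_conv_add_uminus scaleR_minus1_left scaleR_scaleC)

lemma csub_scaleR: "csubspace K \<Longrightarrow> x \<in> K \<Longrightarrow> scaleR r (x::'a::cinner_space) \<in> K"
  unfolding csubspace_def by (metis scaleR_scaleC)

lemma csub_add: "csubspace K \<Longrightarrow> x \<in> K \<Longrightarrow> y \<in> K \<Longrightarrow> x + (y::'a::cinner_space) \<in> K"
  unfolding csubspace_def by blast

lemma csub_scaleC: "csubspace K \<Longrightarrow> x \<in> K \<Longrightarrow> scaleC c (x::'a::cinner_space) \<in> K"
  unfolding csubspace_def by blast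

lemma csub_zero: "csubspace K \<Longrightarrow> (0::'a::cinner_space) \<in> K"
  unfolding csubspace_def by blast

lemma csub_sum: "csubspace K \<Longrightarrow> (\<And>i. i \<in> I \<Longrightarrow> f i \<in> K) \<Longrightarrow> sum f I \<in> (K::'a::cinner_space set)"
  by (induction I rule: infinite_finite_induct) (auto simp: csub_zero csub_add)

lemma parallelogram:
  "norm (a + b) ^ 2 + norm (a - b) ^ 2 = 2 * norm a ^ 2 + 2 * norm (b::'a::cinner_space) ^ 2"
proof -
  have "cinner (a+b) (a+b) + cinner (a-b) (a-b) = 2 * cinner a a + 2 * cinner b b"
    by (simp add: cinner_add_left cinner_add_right cinner_diff_left cinner_diff_right)
  then have "Re (cinner (a+b) (a+b) + cinner (a-b) (a-b)) = Re (2 * cinner a a + 2 * cinner b b)"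
    by simp
  then show ?thesis by (simp add: norm_sq_cinner)
qed

lemma orth_of_min:
  fixes w u :: "'a::cinner_space"
  assumes "\<And>s. norm w ^ 2 \<le> norm (w - scaleC s u) ^ 2"
  shows "cinner u w = 0"
proof (rule ccontr)
  define a where "a = cinner u w"
  assume "cinner u w \<noteq> 0"
  then have a0: "cmod a ^ 2 > 0" by (simp add: a_def)
  define t :: real where "t = 1 / (norm u ^ 2 + 1)"
  have t0: "t > 0" unfolding t_def by (simp add: add_nonneg_pos)
  have pu: "norm u ^ 2 + 1 > 0" by (simp add: add_nonneg_pos)
  have tu: "t * norm u ^ 2 < 1" unfolding t_def using pu by (simp add: divide_less_eq)
  define s where "s = complex_of_real t * a"
  have aa: "a * cnj a = complex_of_real (cmod a ^ 2)" by (metis complex_norm_square)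
  have "cinner (w - scaleC s u) (w - scaleC s u) =
      cinner w w - s * cinner w u - cnj s * cinner u w + cnj s * s * cinner u u"
    by (simp add: cinner_diff_left cinner_diff_right cinner_scaleC_left cinner_scaleC_right algebra_simps)
  also have "\<dots> = cinner w w - s * cnj a - cnj s * a + cnj s * s * complex_of_real (norm u ^ 2)"
    by (simp add: a_def cinner_self_real[of u] cinner_commute[of w u])
  also have "\<dots> = cinner w w - complex_of_real (2 * t * cmod a ^ 2 - t^2 * cmod a ^ 2 * norm u ^ 2)"
  proof -
    have "s * cnj a = complex_of_real t * (a * cnj a)" by (simp add: s_def)
    moreover have "cnj s * a = complex_of_real t * (a * cnj a)" by (simp add: s_def)
    moreover have "cnj s * s = complex_of_real (t^2) * (a * cnj a)" by (simp add: s_def power2_eq_square)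
    ultimately show ?thesis unfolding aa by (simp add: algebra_simps power2_eq_square)
  qed
  finally have "norm (w - scaleC s u) ^ 2 = norm w ^ 2 - (2 * t * cmod a ^ 2 - t^2 * cmod a ^ 2 * norm u ^ 2)"
    by (simp add: norm_sq_cinner)
  with assms[of s] have "0 \<le> - (2 * t * cmod a ^ 2 - t^2 * cmod a ^ 2 * norm u ^ 2)" by linarith
  then have "t * cmod a ^ 2 * 2 \<le> t * cmod a ^ 2 * (t * norm u ^ 2)"
    by (simp add: algebra_simps power2_eq_square)
  then have "2 \<le> t * norm u ^ 2" using t0 a0 by (simp add: mult_le_cancel_left_pos)
  with tu show False by simp
qed

lemma proj_exists:
  fixes K :: "'a::{cinner_space,complete_space} set"
  assumes K: "csubspace K" "closed K"
  shows "\<exists>k\<in>K. \<forall>u\<in>K. cinner u (v - k) = 0"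
proof -
  define d where "d = Inf ((\<lambda>k. norm (v - k)) ` K)"
  have ne: "(\<lambda>k. norm (v - k)) ` K \<noteq> {}" using csub_zero[OF K(1)] by blast
  have bdd: "bdd_below ((\<lambda>k. norm (v - k)) ` K)" by (rule bdd_belowI[of _ 0]) auto
  have dle: "d \<le> norm (v - k)" if "k \<in> K" for k
    unfolding d_def using bdd that by (simp add: cInf_lower)
  have d0: "d \<ge> 0" using ne unfolding d_def by (auto intro: cInf_greatest)
  have "\<exists>k\<in>K. norm (v - k) ^ 2 < d ^ 2 + 1 / (real n + 1)" for n
  proof -
    have pos: "d ^ 2 + 1 / (real n + 1) \<ge> 0" by (simp add: add_nonneg_nonneg)
    have "d ^ 2 < d ^ 2 + 1 / (real n + 1)" by simp
    then have "d < sqrt (d ^ 2 + 1 / (real n + 1))" by (rule real_less_rsqrt)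
    then obtain k where k: "k \<in> K" "norm (v - k) < sqrt (d ^ 2 + 1 / (real n + 1))"
      using cInf_lessD[OF ne] unfolding d_def by blast
    have "norm (v - k) ^ 2 < sqrt (d ^ 2 + 1 / (real n + 1)) ^ 2"
      by (rule power_strict_mono[OF k(2)]) auto
    then show ?thesis using k(1) pos by auto
  qed
  then obtain ks where ks: "\<And>n. ks n \<in> K" "\<And>n. norm (v - ks n) ^ 2 < d ^ 2 + 1 / (real n + 1)"
    by metis
  have diffb: "norm (ks n - ks m) ^ 2 \<le> 2 / (real n + 1) + 2 / (real m + 1)" for n m
  proof -
    have mid: "scaleR (1/2) (ks n + ks m) \<in> K"
      by (intro csub_scaleR csub_add K ks)
    have "(v - ks n) + (v - ks m) = scaleR 2 (v - scaleR (1/2) (ks n + ks m))"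
      by (simp add: algebra_simps scaleR_2)
    then have "norm ((v - ks n) + (v - ks m)) = 2 * norm (v - scaleR (1/2) (ks n + ks m))" by simp
    moreover have "d \<le> norm (v - scaleR (1/2) (ks n + ks m))" using dle[OF mid] .
    ultimately have "norm ((v - ks n) + (v - ks m)) ^ 2 \<ge> 4 * d ^ 2"
    proof -
      assume h: "norm ((v - ks n) + (v - ks m)) = 2 * norm (v - scaleR (1/2) (ks n + ks m))"
        "d \<le> norm (v - scaleR (1/2) (ks n + ks m))"
      have "d ^ 2 \<le> norm (v - scaleR (1/2) (ks n + ks m)) ^ 2" using h(2) d0 by (rule power_mono)
      then show ?thesis unfolding h(1) by (simp add: power_mult_distrib)
    qed
    moreover have "norm ((v - ks n) - (v - ks m)) ^ 2 = norm (ks n - ks m) ^ 2"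
    proof -
      have "(v - ks n) - (v - ks m) = ks m - ks n" by simp
      then show ?thesis by (simp add: norm_minus_commute)
    qed
    moreover note parallelogram[of "v - ks n" "v - ks m"] ks(2)[of n] ks(2)[of m]
    moreover have "2 / (real n + 1) = 2 * (1 / (real n + 1))" "2 / (real m + 1) = 2 * (1 / (real m + 1))"
      by simp_all
    ultimately show ?thesis by linarith
  qed
  have "Cauchy ks"
  proof (rule metric_CauchyI)
    fix e :: real assume e: "e > 0"
    obtain N :: nat where N: "4 / e ^ 2 < real N" using reals_Archimedean2 by blast
    have "dist (ks m) (ks n) < e" if "m \<ge> N" "n \<ge> N" for m n
    proof -
      have "2 / (real m + 1) \<le> 2 / (real N + 1)" "2 / (real n + 1) \<le> 2 / (real N + 1)"
        using that by (auto intro!: divide_left_mono)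
      moreover have "4 / (real N + 1) < e ^ 2"
      proof -
        have e2: "e ^ 2 > 0" using e by simp
        have "4 < real N * e ^ 2" using N e2 by (simp add: pos_divide_less_eq)
        then have "4 < real N * e ^ 2 + 1 * e ^ 2" using e2 by linarith
        then have "4 < (real N + 1) * e ^ 2" by (simp only: distrib_right)
        then show ?thesis by (simp add: pos_divide_less_eq mult.commute)
      qed
      ultimately have "norm (ks m - ks n) ^ 2 < e ^ 2" using diffb[of m n] by linarith
      then have "norm (ks m - ks n) < e" using e power2_less_imp_less[of "norm (ks m - ks n)" e] by simp
      then show ?thesis by (simp add: dist_norm)
    qed
    then show "\<exists>M. \<forall>m\<ge>M. \<forall>n\<ge>M. dist (ks m) (ks n) < e" by blast
  qed
  then obtain k where lim: "ks \<longlonglongrightarrow> k" using Cauchy_convergent_iff convergent_def by blast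
  have kK: "k \<in> K" using closed_sequentially[OF K(2)] ks(1) lim by blast
  have nlim: "(\<lambda>n. norm (v - ks n) ^ 2) \<longlonglongrightarrow> norm (v - k) ^ 2"
    by (intro tendsto_intros lim)
  have "norm (v - k) ^ 2 \<le> d ^ 2"
  proof (rule field_le_epsilon)
    fix e :: real assume e: "e > 0"
    obtain N :: nat where N: "1 / e < real N" using reals_Archimedean2 by blast
    have "norm (v - k) ^ 2 \<le> d ^ 2 + 1 / (real N + 1)"
    proof (rule LIMSEQ_le_const2[OF nlim])
      show "\<exists>M. \<forall>n\<ge>M. norm (v - ks n) ^ 2 \<le> d ^ 2 + 1 / (real N + 1)"
      proof (intro exI allI impI)
        fix n assume "n \<ge> N"
        then have "1 / (real n + 1) \<le> 1 / (real N + 1)" by (auto intro!: divide_left_mono)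
        then show "norm (v - ks n) ^ 2 \<le> d ^ 2 + 1 / (real N + 1)" using ks(2)[of n] by linarith
      qed
    qed
    moreover have "1 / (real N + 1) < e"
    proof -
      have "1 < real N * e" using N e by (simp add: pos_divide_less_eq)
      then have "1 < real N * e + 1 * e" using e by linarith
      then have "1 < (real N + 1) * e" by (simp only: distrib_right)
      then show ?thesis by (simp add: pos_divide_less_eq mult.commute)
    qed
    ultimately show "norm (v - k) ^ 2 \<le> d ^ 2 + e" by linarith
  qed
  then have kmin: "norm (v - k) ^ 2 \<le> norm (v - k') ^ 2" if "k' \<in> K" for k'
    using dle[OF that] d0 by (meson order.trans power_mono)
  have "cinner u (v - k) = 0" if u: "u \<in> K" for u
  proof (rule orth_of_min)
    fix s
    have "k + scaleC s u \<in> K" by (intro csub_add csub_scaleC K kK u)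
    from kmin[OF this] show "norm (v - k) ^ 2 \<le> norm (v - k - scaleC s u) ^ 2"
      by (simp add: diff_diff_eq)
  qed
  with kK show ?thesis by blast
qed

lemma proj_unique:
  fixes K :: "'a::cinner_space set"
  assumes K: "csubspace K" and k1: "k1 \<in> K" "\<forall>u\<in>K. cinner u (v - k1) = 0"
    and k2: "k2 \<in> K" "\<forall>u\<in>K. cinner u (v - k2) = 0"
  shows "k1 = k2"
proof -
  have d: "k1 - k2 \<in> K" by (rule csub_diff[OF K k1(1) k2(1)])
  have "cinner (k1 - k2) (k1 - k2) = cinner (k1 - k2) (v - k2) - cinner (k1 - k2) (v - k1)"
    by (simp add: cinner_diff_right)
  also have "\<dots> = 0" using d k1 k2 by simp
  finally show ?thesis using cinner_eq_zero_iff[of "k1 - k2"] by simp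
qed

lemma proj_props:
  fixes K :: "'a::{cinner_space,complete_space} set"
  assumes K: "csubspace K" "closed K"
  shows "proj K v \<in> K" "\<And>u. u \<in> K \<Longrightarrow> cinner u (v - proj K v) = 0"
proof -
  have ex1: "\<exists>!k. k \<in> K \<and> (\<forall>u\<in>K. cinner u (v - k) = 0)"
    using proj_exists[OF K, of v] proj_unique[OF K(1)] by blast
  have "proj K v \<in> K \<and> (\<forall>u\<in>K. cinner u (v - proj K v) = 0)"
    unfolding proj_def by (rule theI'[OF ex1])
  then show "proj K v \<in> K" "\<And>u. u \<in> K \<Longrightarrow> cinner u (v - proj K v) = 0" by auto
qed

lemma sa_add: "self_adjoint H D X \<Longrightarrow> u \<in> D \<Longrightarrow> v \<in> D \<Longrightarrow> X (u + v) = X u + X v"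
  unfolding self_adjoint_def by blast
lemma sa_scaleC: "self_adjoint H D X \<Longrightarrow> u \<in> D \<Longrightarrow> X (scaleC c u) = scaleC c (X u)"
  unfolding self_adjoint_def by blast
lemma sa_sym: "self_adjoint H D X \<Longrightarrow> u \<in> D \<Longrightarrow> v \<in> D \<Longrightarrow> cinner (X u) v = cinner u (X v)"
  unfolding self_adjoint_def by blast
lemma sa_dom: "self_adjoint H D X \<Longrightarrow> csubspace D"
  unfolding self_adjoint_def by blast
lemma sa_DH: "self_adjoint H D X \<Longrightarrow> D \<subseteq> H"
  unfolding self_adjoint_def by blast
lemma sa_dense: "self_adjoint H D X \<Longrightarrow> H \<subseteq> closure D"
  unfolding self_adjoint_def by blast
lemma sa_range: "self_adjoint H D X \<Longrightarrow> u \<in> D \<Longrightarrow> X u \<in> H"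
  unfolding self_adjoint_def by blast
lemma sa_adj: "self_adjoint H D X \<Longrightarrow> v \<in> H \<Longrightarrow> w \<in> H \<Longrightarrow> (\<forall>u\<in>D. cinner (X u) v = cinner u w) \<Longrightarrow> v \<in> D"
  unfolding self_adjoint_def by blast

lemma sa_zero: assumes "self_adjoint H D X" shows "X 0 = (0::'a::cinner_space)"
  using sa_add[OF assms, of 0 0] csub_zero[OF sa_dom[OF assms]] by simp

lemma eig_csub:
  fixes X :: "'a::cinner_space \<Rightarrow> 'a"
  assumes sa: "self_adjoint H D X"
  shows "csubspace (eigenspace D X x)"
proof -
  have D: "csubspace D" using sa by (rule sa_dom)
  show ?thesis unfolding csubspace_def eigenspace_def
  proof (intro conjI ballI allI)
    show "0 \<in> {v \<in> D. X v = scaleC (complex_of_real x) v}" using csub_zero[OF D] sa_zero[OF sa] by simp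
  next
    fix a b assume a: "a \<in> {v \<in> D. X v = scaleC (complex_of_real x) v}" and b: "b \<in> {v \<in> D. X v = scaleC (complex_of_real x) v}"
    then show "a + b \<in> {v \<in> D. X v = scaleC (complex_of_real x) v}"
      using csub_add[OF D] sa_add[OF sa] by (simp add: scaleC_add_right)
  next
    fix c a assume a: "a \<in> {v \<in> D. X v = scaleC (complex_of_real x) v}"
    then show "scaleC c a \<in> {v \<in> D. X v = scaleC (complex_of_real x) v}"
      using csub_scaleC[OF D] sa_scaleC[OF sa] by (simp add: scaleC_scaleC mult.commute)
  qed
qed

lemma adj_unique:
  fixes X :: "'a::cinner_space \<Rightarrow> 'a"
  assumes sa: "self_adjoint H D X" and H: "csubspace H"
    and w: "w1 \<in> H" "w2 \<in> H" "\<forall>u\<in>D. cinner u w1 = cinner u w2"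
  shows "w1 = w2"
proof -
  have z: "w1 - w2 \<in> H" using csub_diff[OF H w(1,2)] .
  then have "w1 - w2 \<in> closure D" using sa_dense[OF sa] by blast
  then obtain us where us: "\<And>n. us n \<in> D" "us \<longlonglongrightarrow> w1 - w2"
    using closure_sequential by blast
  have "(\<lambda>n. cinner (us n) (w1 - w2)) \<longlonglongrightarrow> cinner (w1 - w2) (w1 - w2)"
    by (rule tendsto_cinner_left[OF us(2)])
  moreover have "(\<lambda>n. cinner (us n) (w1 - w2)) = (\<lambda>n. 0)"
  proof
    fix n
    have "cinner (us n) w1 = cinner (us n) w2" using w(3) us(1)[of n] by blast
    then show "cinner (us n) (w1 - w2) = 0" by (simp add: cinner_diff_right)
  qed
  ultimately have "(\<lambda>n. 0) \<longlonglongrightarrow> cinner (w1 - w2) (w1 - w2)" by simp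
  then have "cinner (w1 - w2) (w1 - w2) = 0"
    using LIMSEQ_unique[OF _ tendsto_const] by metis
  then show ?thesis using cinner_eq_zero_iff[of "w1 - w2"] by simp
qed

lemma eig_closed:
  fixes X :: "'a::{cinner_space,complete_space} \<Rightarrow> 'a"
  assumes sa: "self_adjoint H D X" and H: "hilbert_subspace H"
  shows "closed (eigenspace D X x)"
proof -
  have Hc: "csubspace H" "closed H" using H unfolding hilbert_subspace_def by auto
  show ?thesis
  proof (unfold closed_sequential_limits, intro allI impI, elim conjE)
    fix vs v assume vs: "\<forall>n. vs n \<in> eigenspace D X x" and lim: "vs \<longlonglongrightarrow> v"
    have vsD: "vs n \<in> D" "X (vs n) = scaleC (complex_of_real x) (vs n)" for n
      using vs unfolding eigenspace_def by auto
    have vH: "v \<in> H" using closed_sequentially[OF Hc(2)] vsD(1) sa_DH[OF sa] lim by blast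
    have xvH: "scaleC (complex_of_real x) v \<in> H" by (rule csub_scaleC[OF Hc(1) vH])
    have key: "cinner (X u) v = cinner u (scaleC (complex_of_real x) v)" if u: "u \<in> D" for u
    proof -
      have "(\<lambda>n. cinner (X u) (vs n)) \<longlonglongrightarrow> cinner (X u) v" by (rule tendsto_cinner_right[OF lim])
      moreover have "(\<lambda>n. cinner (X u) (vs n)) = (\<lambda>n. complex_of_real x * cinner u (vs n))"
      proof
        fix n show "cinner (X u) (vs n) = complex_of_real x * cinner u (vs n)"
          using sa_sym[OF sa u vsD(1)[of n]] vsD(2)[of n] by (simp add: cinner_scaleC_right)
      qed
      moreover have "(\<lambda>n. complex_of_real x * cinner u (vs n)) \<longlonglongrightarrow> complex_of_real x * cinner u v"
        by (intro tendsto_mult tendsto_const tendsto_cinner_right[OF lim])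
      ultimately have "cinner (X u) v = complex_of_real x * cinner u v"
        using LIMSEQ_unique by metis
      then show ?thesis by (simp add: cinner_scaleC_right)
    qed
    have vD: "v \<in> D" using sa_adj[OF sa vH xvH] key by blast
    have "X v = scaleC (complex_of_real x) v"
    proof (rule adj_unique[OF sa Hc(1) sa_range[OF sa vD] xvH], intro ballI)
      fix u assume u: "u \<in> D"
      show "cinner u (X v) = cinner u (scaleC (complex_of_real x) v)"
        using sa_sym[OF sa u vD] key[OF u] by simp
    qed
    with vD show "v \<in> eigenspace D X x" unfolding eigenspace_def by simp
  qed
qed

lemma eig_orth:
  fixes X :: "'a::cinner_space \<Rightarrow> 'a"
  assumes sa: "self_adjoint H D X" and xy: "x \<noteq> y"
    and u: "u \<in> eigenspace D X x" and v: "v \<in> eigenspace D X y"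
  shows "cinner u v = 0"
proof -
  have uD: "u \<in> D" "X u = scaleC (complex_of_real x) u" using u unfolding eigenspace_def by auto
  have vD: "v \<in> D" "X v = scaleC (complex_of_real y) v" using v unfolding eigenspace_def by auto
  have "complex_of_real x * cinner u v = complex_of_real y * cinner u v"
    using sa_sym[OF sa uD(1) vD(1)] uD(2) vD(2) by (simp add: cinner_scaleC_left cinner_scaleC_right)
  then have "(complex_of_real x - complex_of_real y) * cinner u v = 0" by (simp add: algebra_simps)
  then show ?thesis using xy by simp
qed

definition pw :: "('h::cinner_space, 's) qmeas \<Rightarrow> real \<Rightarrow> real" where
  "pw M x = Re (cinner (state M) (Pproj M x (state M)))"

lemma weight_pw: "weight M E = infsum (pw M) (cg M ` E)"
  unfolding weight_def pw_def by simp

lemma qm_H: "quantum_measurement M \<Longrightarrow> hilbert_subspace (hspace M)"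
  and qm_sa: "quantum_measurement M \<Longrightarrow> self_adjoint (hspace M) (odom M) (obs M)"
  and qm_psi: "quantum_measurement M \<Longrightarrow> state M \<in> hspace M"
  and qm_norm: "quantum_measurement M \<Longrightarrow> norm (state M) = 1"
  and qm_disc: "quantum_measurement M \<Longrightarrow> discrete_spectrum (hspace M) (odom M) (obs M)"
  and qm_cg: "quantum_measurement M \<Longrightarrow> cg M ` outcomes M = spec M"
  unfolding quantum_measurement_def by auto

lemma P_props:
  fixes M :: "('h::{cinner_space,complete_space}, 's) qmeas"
  assumes qm: "quantum_measurement M"
  shows "Pproj M x v \<in> eigenspace (odom M) (obs M) x"
    "\<And>u. u \<in> eigenspace (odom M) (obs M) x \<Longrightarrow> cinner u (v - Pproj M x v) = 0"
  unfolding Pproj_def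
  using proj_props[OF eig_csub[OF qm_sa[OF qm]] eig_closed[OF qm_sa[OF qm] qm_H[OF qm]]] by auto

lemma P_orth:
  fixes M :: "('h::{cinner_space,complete_space}, 's) qmeas"
  assumes qm: "quantum_measurement M" and xy: "x \<noteq> y"
  shows "cinner (Pproj M x v) (Pproj M y w) = 0"
  by (rule eig_orth[OF qm_sa[OF qm] xy P_props(1)[OF qm] P_props(1)[OF qm]])

lemma pw_norm:
  fixes M :: "('h::{cinner_space,complete_space}, 's) qmeas"
  assumes qm: "quantum_measurement M"
  shows "pw M x = norm (Pproj M x (state M)) ^ 2"
proof -
  define p where "p = Pproj M x (state M)"
  have o: "cinner p (state M - p) = 0" unfolding p_def by (rule P_props(2)[OF qm P_props(1)[OF qm]])
  have "cinner (state M) p = cinner p p + cinner (state M - p) p"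
    by (simp add: cinner_diff_left)
  also have "cinner (state M - p) p = 0" using o cinner_commute[of "state M - p" p] by simp
  finally show ?thesis unfolding pw_def p_def[symmetric] by (simp add: norm_sq_cinner)
qed

lemma pw_nonneg:
  fixes M :: "('h::{cinner_space,complete_space}, 's) qmeas"
  assumes qm: "quantum_measurement M"
  shows "pw M x \<ge> 0"
  using pw_norm[OF qm] by simp

definition sP :: "('h::cinner_space, 's) qmeas \<Rightarrow> real set \<Rightarrow> 'h" where
  "sP M G = (\<Sum>x\<in>G. Pproj M x (state M))"

lemma norm_sP:
  fixes M :: "('h::{cinner_space,complete_space}, 's) qmeas"
  assumes qm: "quantum_measurement M" and G: "finite G"
  shows "norm (sP M G) ^ 2 = (\<Sum>x\<in>G. pw M x)"
  using G
proof (induction G rule: finite_induct)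
  case empty then show ?case by (simp add: sP_def)
next
  case (insert y G)
  have "cinner (Pproj M y (state M)) (sP M G) = 0"
    unfolding sP_def cinner_sum_right using insert(2) P_orth[OF qm]
    by (intro sum.neutral) (metis)
  then have "norm (Pproj M y (state M) + sP M G) ^ 2 = norm (Pproj M y (state M)) ^ 2 + norm (sP M G) ^ 2"
    by (rule pythagoras)
  moreover have "sP M (insert y G) = Pproj M y (state M) + sP M G"
    unfolding sP_def using insert(1,2) by simp
  ultimately show ?case using insert(1,2,3) pw_norm[OF qm, of y] by simp
qed

lemma resid_orth:
  fixes M :: "('h::{cinner_space,complete_space}, 's) qmeas"
  assumes qm: "quantum_measurement M" and G: "finite G" "y \<in> G"
    and u: "u \<in> eigenspace (odom M) (obs M) y"
  shows "cinner u (state M - sP M G) = 0"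
proof -
  have "sP M G = Pproj M y (state M) + (\<Sum>x\<in>G-{y}. Pproj M x (state M))"
    unfolding sP_def using G by (simp add: sum.remove)
  then have "cinner u (state M - sP M G) = cinner u (state M - Pproj M y (state M))
      - (\<Sum>x\<in>G-{y}. cinner u (Pproj M x (state M)))"
    by (simp add: cinner_diff_right cinner_add_right cinner_sum_right diff_diff_eq[symmetric])
  also have "cinner u (state M - Pproj M y (state M)) = 0" by (rule P_props(2)[OF qm u])
  also have "(\<Sum>x\<in>G-{y}. cinner u (Pproj M x (state M))) = 0"
  proof (intro sum.neutral ballI)
    fix x assume "x \<in> G - {y}"
    then have "y \<noteq> x" by auto
    then show "cinner u (Pproj M x (state M)) = 0"
      by (rule eig_orth[OF qm_sa[OF qm] _ u P_props(1)[OF qm]])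
  qed
  finally show ?thesis by simp
qed

lemma sP_orth:
  fixes M :: "('h::{cinner_space,complete_space}, 's) qmeas"
  assumes qm: "quantum_measurement M" and G: "finite G"
  shows "cinner (sP M G) (state M - sP M G) = 0"
proof -
  have "cinner (sP M G) (state M - sP M G) = (\<Sum>x\<in>G. cinner (Pproj M x (state M)) (state M - sP M G))"
    unfolding sP_def[of M G] by (simp add: cinner_sum_left sP_def)
  also have "\<dots> = 0"
  proof (intro sum.neutral ballI)
    fix x assume "x \<in> G"
    then show "cinner (Pproj M x (state M)) (state M - sP M G) = 0"
      using resid_orth[OF qm G _ P_props(1)[OF qm]] by blast
  qed
  finally show ?thesis .
qed

lemma sum_pw_eq:
  fixes M :: "('h::{cinner_space,complete_space}, 's) qmeas"
  assumes qm: "quantum_measurement M" and G: "finite G"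
  shows "(\<Sum>x\<in>G. pw M x) = 1 - norm (state M - sP M G) ^ 2"
proof -
  have "norm (sP M G + (state M - sP M G)) ^ 2 = norm (sP M G) ^ 2 + norm (state M - sP M G) ^ 2"
    by (rule pythagoras[OF sP_orth[OF qm G]])
  then show ?thesis using qm_norm[OF qm] norm_sP[OF qm G] by simp
qed

lemma sum_pw_le1:
  fixes M :: "('h::{cinner_space,complete_space}, 's) qmeas"
  assumes qm: "quantum_measurement M" and G: "finite G"
  shows "(\<Sum>x\<in>G. pw M x) \<le> 1"
  using sum_pw_eq[OF qm G] by simp

lemma approx_total:
  fixes M :: "('h::{cinner_space,complete_space}, 's) qmeas"
  assumes qm: "quantum_measurement M" and e: "e > 0"
  shows "\<exists>G. finite G \<and> G \<subseteq> spec M \<and> 1 - e \<le> (\<Sum>x\<in>G. pw M x)"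
proof -
  let ?E = "eigenspace (odom M) (obs M)"
  let ?psi = "state M"
  have "?psi \<in> closure (cspan (\<Union>x\<in>spec M. ?E x))"
    using qm_psi[OF qm] qm_disc[OF qm] unfolding discrete_spectrum_def spec_def by blast
  moreover have "sqrt e > 0" using e by simp
  ultimately obtain phi where phi: "phi \<in> cspan (\<Union>x\<in>spec M. ?E x)" "dist phi ?psi < sqrt e"
    unfolding closure_approachable by blast
  then obtain F c where F: "finite F" "F \<subseteq> (\<Union>x\<in>spec M. ?E x)" "phi = (\<Sum>v\<in>F. scaleC (c v) v)"
    unfolding cspan_def by blast
  have "\<forall>v\<in>F. \<exists>x\<in>spec M. v \<in> ?E x" using F(2) by blast
  then obtain xf where xf: "\<And>v. v \<in> F \<Longrightarrow> xf v \<in> spec M \<and> v \<in> ?E (xf v)" by metis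
  define G where "G = xf ` F"
  have G: "finite G" "G \<subseteq> spec M" using F(1) xf unfolding G_def by auto
  define s where "s = sP M G"
  have o1: "cinner (?psi - s) s = 0"
    using sP_orth[OF qm G(1)] cinner_commute[of "?psi - s" s] unfolding s_def by simp
  have o2: "cinner (?psi - s) phi = 0"
    unfolding F(3) cinner_sum_right
  proof (intro sum.neutral ballI)
    fix v assume v: "v \<in> F"
    have "cinner v (?psi - s) = 0" unfolding s_def
      using resid_orth[OF qm G(1), of "xf v" v] xf[OF v] by (simp add: G_def v)
    then have "cinner (?psi - s) v = 0" using cinner_commute[of "?psi - s" v] by simp
    then show "cinner (?psi - s) (scaleC (c v) v) = 0" by (simp add: cinner_scaleC_right)
  qed
  have "cinner (?psi - s) (s - phi) = 0" using o1 o2 by (simp add: cinner_diff_right)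
  then have "norm ((?psi - s) + (s - phi)) ^ 2 = norm (?psi - s) ^ 2 + norm (s - phi) ^ 2"
    by (rule pythagoras)
  then have "norm (?psi - s) ^ 2 \<le> norm (?psi - phi) ^ 2" by simp
  also have "norm (?psi - phi) ^ 2 < sqrt e ^ 2"
    using phi(2) by (intro power_strict_mono) (auto simp: dist_norm norm_minus_commute)
  also have "\<dots> = e" using e by simp
  finally have "norm (?psi - s) ^ 2 < e" .
  then have "1 - e \<le> (\<Sum>x\<in>G. pw M x)" using sum_pw_eq[OF qm G(1)] unfolding s_def by simp
  with G show ?thesis by blast
qed

lemma pw_summable:
  fixes M :: "('h::{cinner_space,complete_space}, 's) qmeas"
  assumes qm: "quantum_measurement M"
  shows "pw M summable_on A"
proof (rule nonneg_bdd_above_summable_on)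
  show "\<And>x. x \<in> A \<Longrightarrow> 0 \<le> pw M x" using pw_nonneg[OF qm] by blast
  show "bdd_above (sum (pw M) ` {F. F \<subseteq> A \<and> finite F})"
    using sum_pw_le1[OF qm] by (intro bdd_aboveI[of _ 1]) auto
qed

lemma pw_total:
  fixes M :: "('h::{cinner_space,complete_space}, 's) qmeas"
  assumes qm: "quantum_measurement M"
  shows "infsum (pw M) (spec M) = 1"
proof (rule antisym)
  show "infsum (pw M) (spec M) \<le> 1"
    by (rule infsum_le_finite_sums[OF pw_summable[OF qm]]) (rule sum_pw_le1[OF qm])
  show "1 \<le> infsum (pw M) (spec M)"
  proof (rule field_le_epsilon)
    fix e :: real assume e: "e > 0"
    then obtain G where G: "finite G" "G \<subseteq> spec M" "1 - e \<le> (\<Sum>x\<in>G. pw M x)"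
      using approx_total[OF qm] by blast
    have "(\<Sum>x\<in>G. pw M x) \<le> infsum (pw M) (spec M)"
      by (rule finite_sum_le_infsum[OF pw_summable[OF qm] G(1,2)]) (simp add: pw_nonneg[OF qm])
    then show "1 \<le> infsum (pw M) (spec M) + e" using G(3) by simp
  qed
qed

lemma weight_total:
  fixes M :: "('h::{cinner_space,complete_space}, 's) qmeas"
  assumes qm: "quantum_measurement M"
  shows "weight M (outcomes M) = 1"
  unfolding weight_pw qm_cg[OF qm] by (rule pw_total[OF qm])

lemma weight_nonneg:
  fixes M :: "('h::{cinner_space,complete_space}, 's) qmeas"
  assumes qm: "quantum_measurement M"
  shows "weight M E \<ge> 0"
  unfolding weight_pw by (rule infsum_nonneg) (simp add: pw_nonneg[OF qm])

lemma weight_mono: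
  fixes M :: "('h::{cinner_space,complete_space}, 's) qmeas"
  assumes qm: "quantum_measurement M" and "E \<subseteq> F"
  shows "weight M E \<le> weight M F"
  unfolding weight_pw using assms
  by (intro infsum_mono2 pw_summable[OF qm]) (auto simp: pw_nonneg[OF qm])

lemma weight_le1:
  fixes M :: "('h::{cinner_space,complete_space}, 's) qmeas"
  assumes qm: "quantum_measurement M" and "E \<subseteq> outcomes M"
  shows "weight M E \<le> 1"
  using weight_mono[OF qm assms(2)] weight_total[OF qm] by simp

lemma weight_single: "weight M {a} = pw M (cg M a)"
  unfolding weight_pw by simp

lemma weight_finite: "finite E \<Longrightarrow> weight M E = (\<Sum>x\<in>cg M ` E. pw M x)"
  unfolding weight_pw by simp

lemma weight_empty: "weight M {} = 0"
  unfolding weight_pw by simp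

lemma sum_take_nth: "k \<le> length xs \<Longrightarrow> (\<Sum>i<k. xs ! i) = sum_list (take k xs)"
  by (simp add: sum_list_sum_nth lessThan_atLeast0 min_def)

lemma sum_list_filter_pos: "(\<forall>x\<in>set xs. (0::real) \<le> x) \<Longrightarrow> sum_list (filter (\<lambda>x. 0 < x) xs) = sum_list xs"
  by (induction xs) auto

locale setting =
  fixes MM :: "('h::{cinner_space,complete_space}, 's) qmeas set"
    and ge :: "('h, 's) lordering"
  assumes qmA: "\<forall>M\<in>MM. quantum_measurement M"
    and richA: "rich MM"
    and mrA: "minimally_rational MM ge"
    and eqA: "satisfies_equivalence MM ge"
begin

lemma qm: "M \<in> MM \<Longrightarrow> quantum_measurement M" using qmA by blast

lemma mr1: "\<forall>M\<in>MM. \<forall>N\<in>MM. \<forall>K\<in>MM. \<forall>E F G.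
        E \<subseteq> outcomes M \<and> F \<subseteq> outcomes N \<and> G \<subseteq> outcomes K \<and>
        ge E M F N \<and> ge F N G K \<longrightarrow> ge E M G K"
  using mrA unfolding minimally_rational_def by (rule conjunct1)

lemma sep: "\<exists>M\<in>MM. \<exists>E. E \<subseteq> outcomes M \<and> \<not> lnull ge E M"
  using mrA unfolding minimally_rational_def by (elim conjE)

lemma mr3: "\<forall>M\<in>MM. \<forall>E F. E \<subseteq> F \<and> F \<subseteq> outcomes M \<longrightarrow>
        ge F M E M \<and> (lsim ge F M E M \<longleftrightarrow> lnull ge (F - E) M)"
  using mrA unfolding minimally_rational_def by (elim conjE)

lemma trans: "M \<in> MM \<Longrightarrow> N \<in> MM \<Longrightarrow> K \<in> MM \<Longrightarrow> E \<subseteq> outcomes M \<Longrightarrow> F \<subseteq> outcomes N \<Longrightarrow>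
   G \<subseteq> outcomes K \<Longrightarrow> ge E M F N \<Longrightarrow> ge F N G K \<Longrightarrow> ge E M G K"
  using mr1[rule_format, of M N K E F G] by blast

lemma dom1: "M \<in> MM \<Longrightarrow> E \<subseteq> F \<Longrightarrow> F \<subseteq> outcomes M \<Longrightarrow> ge F M E M"
  using mr3[rule_format, of M E F] by blast

lemma dom2: "M \<in> MM \<Longrightarrow> E \<subseteq> F \<Longrightarrow> F \<subseteq> outcomes M \<Longrightarrow> lsim ge F M E M \<longleftrightarrow> lnull ge (F - E) M"
  using mr3[rule_format, of M E F] by blast

lemma eqv: "M \<in> MM \<Longrightarrow> N \<in> MM \<Longrightarrow> E \<subseteq> outcomes M \<Longrightarrow> F \<subseteq> outcomes N \<Longrightarrow>
   weight M E = weight N F \<Longrightarrow> lsim ge E M F N"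
  using eqA unfolding satisfies_equivalence_def by blast

lemma lsim_trans: "M \<in> MM \<Longrightarrow> N \<in> MM \<Longrightarrow> K \<in> MM \<Longrightarrow> E \<subseteq> outcomes M \<Longrightarrow> F \<subseteq> outcomes N \<Longrightarrow>
   G \<subseteq> outcomes K \<Longrightarrow> lsim ge E M F N \<Longrightarrow> lsim ge F N G K \<Longrightarrow> lsim ge E M G K"
  unfolding lsim_def using trans by blast

lemma lsim_sym: "lsim ge E M F N \<Longrightarrow> lsim ge F N E M"
  unfolding lsim_def by blast

lemma null_transfer:
  assumes MN: "M \<in> MM" "N \<in> MM" and EF: "E \<subseteq> outcomes M" "F \<subseteq> outcomes N"
    and n: "lnull ge F N" and s: "lsim ge E M F N"
  shows "lnull ge E M"
proof -
  have e: "lsim ge {} N {} M" by (rule eqv) (use MN in \<open>auto simp: weight_empty\<close>)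
  have "lsim ge E M {} N" using lsim_trans[OF MN(1,2,2) EF _ s] n unfolding lnull_def by blast
  then have "lsim ge E M {} M" using lsim_trans[OF MN(1,2,1) EF(1) _ _ _ e] by blast
  then show ?thesis unfolding lnull_def .
qed

lemma weight_le1': "M \<in> MM \<Longrightarrow> E \<subseteq> outcomes M \<Longrightarrow> weight M E \<le> 1"
  using weight_le1 qm by blast

lemma weight_nonneg': "M \<in> MM \<Longrightarrow> weight M E \<ge> 0"
  using weight_nonneg qm by blast

lemma richR:
  fixes n :: nat and w :: "nat \<Rightarrow> real"
  assumes R: "R \<in> MM" and f: "bij_betw f {..<n} (outcomes R)"
    and w: "\<forall>i<n. 0 < w i" "(\<Sum>i<n. w i) = 1" "\<forall>i<n. weight R {f i} = w i"
    and I: "I \<subseteq> {..<n}"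
  shows "weight R (f ` I) = (\<Sum>i\<in>I. w i)"
proof -
  define g where "g = cg R \<circ> f"
  have pg: "pw R (g i) = w i" if "i < n" for i
    using w(3) that weight_single[of R "f i"] unfolding g_def by simp
  have out: "outcomes R = f ` {..<n}" using f by (simp add: bij_betw_def)
  have tot: "(\<Sum>x\<in>g ` {..<n}. pw R x) = 1"
  proof -
    have "finite (f ` {..<n})" by simp
    then have "weight R (f ` {..<n}) = (\<Sum>x\<in>cg R ` f ` {..<n}. pw R x)" by (rule weight_finite)
    then show ?thesis using weight_total[OF qm[OF R]] out unfolding g_def by (simp add: image_comp)
  qed
  have inj: "inj_on g {..<n}"
  proof (rule ccontr)
    assume "\<not> inj_on g {..<n}"
    then obtain i j where ij: "i < n" "j < n" "i \<noteq> j" "g i = g j"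
      unfolding inj_on_def by blast
    have "g ` {..<n} = g ` ({..<n} - {j})"
    proof
      show "g ` {..<n} \<subseteq> g ` ({..<n} - {j})"
      proof
        fix y assume "y \<in> g ` {..<n}"
        then obtain l where l: "l < n" "y = g l" by blast
        show "y \<in> g ` ({..<n} - {j})"
        proof (cases "l = j")
          case True then show ?thesis using ij l by (metis Diff_iff image_eqI lessThan_iff singletonD)
        next
          case False then show ?thesis using l by blast
        qed
      qed
    qed auto
    then have "1 \<le> (\<Sum>x\<in>g ` ({..<n} - {j}). pw R x)" using tot by simp
    also have "\<dots> \<le> (\<Sum>i\<in>{..<n} - {j}. (pw R \<circ> g) i)"
      by (rule sum_image_le) (auto simp: pw_nonneg[OF qm[OF R]])
    also have "\<dots> = (\<Sum>i\<in>{..<n} - {j}. w i)" by (rule sum.cong) (auto simp: pg)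
    also have "\<dots> = 1 - w j" using w(2) ij(2) by (simp add: sum_diff1)
    finally show False using w(1) ij(2) by auto
  qed
  have "weight R (f ` I) = (\<Sum>x\<in>g ` I. pw R x)"
    using weight_finite[of "f ` I" R] I finite_subset[OF I] unfolding g_def by (simp add: image_comp)
  also have "\<dots> = (\<Sum>i\<in>I. pw R (g i))"
    by (rule sum.reindex_cong[OF inj_on_subset[OF inj I] refl]) simp
  also have "\<dots> = (\<Sum>i\<in>I. w i)" using I by (intro sum.cong) (auto simp: pg)
  finally show ?thesis .
qed

lemma rich_get:
  fixes n :: nat and w :: "nat \<Rightarrow> real"
  assumes "\<forall>i<n. 0 < w i" "(\<Sum>i<n. w i) = 1"
  obtains R f where "R \<in> MM" "bij_betw f {..<n} (outcomes R)" "\<forall>i<n. weight R {f i} = w i"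
  using richA[unfolded rich_def, rule_format, of n w] assms that by blast

lemma nested:
  assumes ab: "0 \<le> a" "a \<le> b" "b \<le> 1"
  shows "\<exists>R\<in>MM. \<exists>A B. A \<subseteq> B \<and> B \<subseteq> outcomes R \<and> weight R A = a \<and> weight R B = b \<and>
     weight R (B - A) = b - a"
proof -
  define P where "P = (\<lambda>x::real. 0 < x)"
  define l1 where "l1 = filter P [a]"
  define l2 where "l2 = filter P [b - a]"
  define l3 where "l3 = filter P [1 - b]"
  define ws where "ws = l1 @ l2 @ l3"
  define n where "n = length ws"
  define w where "w = (\<lambda>i. ws ! i)"
  have wpos: "\<forall>i<n. 0 < w i"
  proof (intro allI impI)
    fix i assume "i < n"
    then have "ws ! i \<in> set ws" unfolding n_def by simp
    then show "0 < w i" unfolding w_def ws_def l1_def l2_def l3_def P_def by auto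
  qed
  have s1: "sum_list l1 = a" unfolding l1_def P_def using ab by auto
  have s2: "sum_list l2 = b - a" unfolding l2_def P_def using ab by auto
  have s3: "sum_list l3 = 1 - b" unfolding l3_def P_def using ab by auto
  have wsum: "(\<Sum>i<n. w i) = 1"
    unfolding w_def n_def using sum_take_nth[of "length ws" ws] s1 s2 s3 by (simp add: ws_def)
  obtain R f where R: "R \<in> MM" "bij_betw f {..<n} (outcomes R)" "\<forall>i<n. weight R {f i} = w i"
    using rich_get[OF wpos wsum] by blast
  define IA where "IA = {..<length l1}"
  define IB where "IB = {..<length l1 + length l2}"
  have IA: "IA \<subseteq> {..<n}" and IB: "IB \<subseteq> {..<n}" and IAB: "IA \<subseteq> IB"
    unfolding IA_def IB_def n_def ws_def by auto
  have "(\<Sum>i\<in>IA. w i) = a"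
    unfolding IA_def w_def using sum_take_nth[of "length l1" ws] s1 by (simp add: ws_def)
  moreover have "(\<Sum>i\<in>IB. w i) = b"
    unfolding IB_def w_def using sum_take_nth[of "length l1 + length l2" ws] s1 s2 by (simp add: ws_def)
  moreover have "(\<Sum>i\<in>IB - IA. w i) = (\<Sum>i\<in>IB. w i) - (\<Sum>i\<in>IA. w i)"
    using IAB by (simp add: sum_diff IB_def)
  moreover have "f ` IB - f ` IA = f ` (IB - IA)"
  proof -
    have inj: "inj_on f {..<n}" using R(2) bij_betw_def by blast
    show ?thesis using inj_on_image_set_diff[OF inj, of IB IA] IA IB by auto
  qed
  moreover have "f ` IB \<subseteq> outcomes R" using R(2) IB bij_betw_imp_surj_on by blast
  ultimately have "weight R (f ` IA) = a" "weight R (f ` IB) = b" "weight R (f ` IB - f ` IA) = b - a"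
    "f ` IA \<subseteq> f ` IB" "f ` IB \<subseteq> outcomes R"
    using richR[OF R(1,2) wpos wsum R(3)] IA IB IAB Diff_subset[of IB IA] order_trans
    by (metis image_mono)+
  then show ?thesis using R(1) by blast
qed

end

context setting begin

lemma null_sub:
  assumes R: "R \<in> MM" and AB: "A \<subseteq> B" "B \<subseteq> outcomes R" and n: "lnull ge B R"
  shows "lnull ge A R"
proof -
  have A: "A \<subseteq> outcomes R" using AB by blast
  have "ge A R {} R" by (rule dom1[OF R]) (use A in auto)
  moreover have "ge {} R A R"
  proof (rule trans[OF R R R _ AB(2) A])
    show "ge {} R B R" using n unfolding lnull_def lsim_def by blast
    show "ge B R A R" by (rule dom1[OF R AB])
  qed auto
  ultimately show ?thesis unfolding lnull_def lsim_def by blast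
qed

lemma null_zero:
  assumes K: "K \<in> MM" and G: "G \<subseteq> outcomes K" and n: "lnull ge G K"
  shows "weight K G = 0"
proof (rule ccontr)
  define w where "w = weight K G"
  assume "weight K G \<noteq> 0"
  then have w0: "w > 0" using weight_nonneg'[OF K, of G] unfolding w_def by linarith
  define Nul where "Nul = (\<lambda>v. \<forall>R\<in>MM. \<forall>A. A \<subseteq> outcomes R \<and> weight R A = v \<longrightarrow> lnull ge A R)"
  have N0: "Nul w" unfolding Nul_def
  proof (intro ballI allI impI, elim conjE)
    fix R A assume R: "R \<in> MM" and A: "A \<subseteq> outcomes R" "weight R A = w"
    have "lsim ge A R G K" by (rule eqv[OF R K A(1) G]) (simp add: A(2) w_def)
    then show "lnull ge A R" by (rule null_transfer[OF R K A(1) G n])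
  qed
  have transfer: "Nul v" if R: "R \<in> MM" "A \<subseteq> outcomes R" "weight R A = v" "lnull ge A R" for v R A
    unfolding Nul_def
  proof (intro ballI allI impI, elim conjE)
    fix R' A' assume R': "R' \<in> MM" and A': "A' \<subseteq> outcomes R'" "weight R' A' = v"
    have "lsim ge A' R' A R" by (rule eqv[OF R'(1) R(1) A'(1) R(2)]) (simp add: A'(2) R(3))
    then show "lnull ge A' R'" by (rule null_transfer[OF R'(1) R(1) A'(1) R(2) R(4)])
  qed
  have down: "Nul a" if hb: "Nul b" "0 \<le> a" "a \<le> b" "b \<le> 1" for a b
  proof -
    obtain R A B where R: "R \<in> MM" "A \<subseteq> B" "B \<subseteq> outcomes R" "weight R A = a" "weight R B = b"
      using nested[OF hb(2,3,4)] by blast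
    have "lnull ge B R" using hb(1) R unfolding Nul_def by blast
    then have "lnull ge A R" by (rule null_sub[OF R(1,2,3)])
    then show ?thesis using transfer[OF R(1) _ R(4)] R(2,3) by blast
  qed
  have up: "Nul (2 * a)" if ha: "Nul a" "0 \<le> a" "2 * a \<le> 1" for a
  proof -
    obtain R A B where R: "R \<in> MM" "A \<subseteq> B" "B \<subseteq> outcomes R" "weight R A = a" "weight R B = 2 * a"
      "weight R (B - A) = 2 * a - a"
      using nested[of a "2 * a"] ha by auto
    have nA: "lnull ge A R" using ha(1) R unfolding Nul_def by blast
    have "B - A \<subseteq> outcomes R" "weight R (B - A) = a" using R by auto
    then have "lnull ge (B - A) R" using ha(1) R(1) unfolding Nul_def by blast
    then have "lsim ge B R A R" using dom2[OF R(1,2,3)] by blast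
    then have "lsim ge B R {} R" using nA R lsim_trans[OF R(1) R(1) R(1), of B A "{}"] unfolding lnull_def by blast
    then have "lnull ge B R" unfolding lnull_def .
    then show ?thesis using transfer[OF R(1) R(3) R(5)] by blast
  qed
  have w1: "w \<le> 1" using weight_le1'[OF K G] unfolding w_def .
  have iter: "Nul (min 1 (2 ^ k * w))" for k
  proof (induction k)
    case 0 then show ?case using N0 w1 by (simp add: min_def)
  next
    case (Suc k)
    define c where "c = min 1 (2 ^ k * w)"
    have c0: "0 \<le> c" using w0 unfolding c_def by simp
    have Nc: "Nul c" using Suc unfolding c_def .
    show ?case
    proof (cases "2 * c \<le> 1")
      case True
      then have "c = 2 ^ k * w" unfolding c_def by (simp add: min_def split: if_splits)
      then have "min 1 (2 ^ Suc k * w) = 2 * c" using True by (simp add: min_def)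
      then show ?thesis using up[OF Nc c0 True] by simp
    next
      case False
      then have "c \<le> 1" unfolding c_def by simp
      then have "Nul (1/2)" using down[OF Nc _ _] False by simp
      then have "Nul (2 * (1/2))" by (rule up) auto
      moreover have "min 1 (2 ^ Suc k * w) = 1"
      proof -
        have "c \<le> 2 ^ k * w" unfolding c_def by simp
        then have "1 < 2 ^ Suc k * w" using False by simp
        then show ?thesis by simp
      qed
      ultimately show ?thesis by simp
    qed
  qed
  obtain k where "1 / w < 2 ^ k" using real_arch_pow[of "2::real" "1 / w"] by auto
  then have "1 < 2 ^ k * w" using w0 by (simp add: divide_less_eq)
  then have N1: "Nul 1" using iter[of k] by (simp add: min_def)
  obtain M E where ME: "M \<in> MM" "E \<subseteq> outcomes M" "\<not> lnull ge E M" using sep by blast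
  have "lnull ge (outcomes M) M" using N1 weight_total[OF qm[OF ME(1)]] ME(1) unfolding Nul_def by blast
  then have "lnull ge E M" by (rule null_sub[OF ME(1) ME(2) order.refl])
  with ME(3) show False by blast
qed

end

context setting begin

lemma add_disj:
  assumes M: "M \<in> MM" and EF: "E \<subseteq> outcomes M" "F \<subseteq> outcomes M" "E \<inter> F = {}"
  shows "weight M (E \<union> F) = weight M E + weight M F"
proof -
  have zero: "pw M x = 0" if x: "x \<in> cg M ` E \<inter> cg M ` F" for x
  proof -
    obtain a b where ab: "a \<in> E" "b \<in> F" "cg M a = x" "cg M b = x" using x by (metis IntD1 IntD2 imageE)
    have ne: "a \<noteq> b" using ab EF(3) by blast
    have sub: "{a} \<subseteq> {a, b}" "{a, b} \<subseteq> outcomes M" using ab EF by auto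
    have "weight M {a, b} = pw M x" using ab by (simp add: weight_pw)
    moreover have "weight M {a} = pw M x" using ab by (simp add: weight_single)
    ultimately have "lsim ge {a, b} M {a} M" by (intro eqv[OF M M sub(2)]) (use sub in auto)
    then have "lnull ge ({a, b} - {a}) M" using dom2[OF M sub] by blast
    moreover have "{a, b} - {a} = {b}" using ne by auto
    ultimately have "lnull ge {b} M" by simp
    moreover have "{b} \<subseteq> outcomes M" using ab EF by auto
    ultimately have "weight M {b} = 0" using null_zero[OF M, of "{b}"] by blast
    then show ?thesis using ab by (simp add: weight_single)
  qed
  have "weight M (E \<union> F) = infsum (pw M) (cg M ` E \<union> (cg M ` F - cg M ` E))"
    unfolding weight_pw by (simp add: image_Un Un_Diff_cancel)
  also have "\<dots> = infsum (pw M) (cg M ` E) + infsum (pw M) (cg M ` F - cg M ` E)"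
    by (rule infsum_Un_disjoint) (auto intro: pw_summable[OF qm[OF M]])
  also have "infsum (pw M) (cg M ` F - cg M ` E) = infsum (pw M) (cg M ` F)"
    by (rule infsum_cong_neutral) (use zero in auto)
  finally show ?thesis unfolding weight_pw .
qed

lemma ge_iff:
  assumes M: "M \<in> MM" and N: "N \<in> MM" and E: "E \<subseteq> outcomes M" and F: "F \<subseteq> outcomes N"
  shows "ge E M F N \<longleftrightarrow> weight N F \<le> weight M E"
proof
  assume g: "ge E M F N"
  show "weight N F \<le> weight M E"
  proof (rule ccontr)
    assume "\<not> weight N F \<le> weight M E"
    then have lt: "weight M E < weight N F" by simp
    obtain R A B where R: "R \<in> MM" "A \<subseteq> B" "B \<subseteq> outcomes R" "weight R A = weight M E"
      "weight R B = weight N F" "weight R (B - A) = weight N F - weight M E"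
      using nested[of "weight M E" "weight N F"] lt weight_nonneg'[OF M] weight_le1'[OF N F] by auto
    have A: "A \<subseteq> outcomes R" using R by blast
    have s1: "lsim ge A R E M" by (rule eqv[OF R(1) M A E]) (simp add: R(4))
    have s2: "lsim ge F N B R" by (rule eqv[OF N R(1) F R(3)]) (simp add: R(5))
    have "ge A R F N" using trans[OF R(1) M N A E F] s1 g unfolding lsim_def by blast
    then have "ge A R B R" using trans[OF R(1) N R(1) A F R(3)] s2 unfolding lsim_def by blast
    moreover have "ge B R A R" by (rule dom1[OF R(1,2,3)])
    ultimately have "lsim ge B R A R" unfolding lsim_def by blast
    then have "lnull ge (B - A) R" using dom2[OF R(1,2,3)] by blast
    then have "weight R (B - A) = 0" using null_zero[OF R(1), of "B - A"] R(3) by blast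
    with R(6) lt show False by simp
  qed
next
  assume le: "weight N F \<le> weight M E"
  obtain R A B where R: "R \<in> MM" "A \<subseteq> B" "B \<subseteq> outcomes R" "weight R A = weight N F"
    "weight R B = weight M E"
    using nested[of "weight N F" "weight M E"] le weight_nonneg'[OF N] weight_le1'[OF M E] by auto
  have A: "A \<subseteq> outcomes R" using R by blast
  have s1: "lsim ge E M B R" by (rule eqv[OF M R(1) E R(3)]) (simp add: R(5))
  have s2: "lsim ge A R F N" by (rule eqv[OF R(1) N A F]) (simp add: R(4))
  have "ge B R A R" by (rule dom1[OF R(1,2,3)])
  then have "ge E M A R" using trans[OF M R(1) R(1) E R(3) A] s1 unfolding lsim_def by blast
  then show "ge E M F N" using trans[OF M R(1) N E A F] s2 unfolding lsim_def by blast
qed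

lemma repr: "represents MM ge (\<lambda>E M. weight M E)"
  unfolding represents_def
proof (intro conjI ballI allI impI)
  fix M assume M: "M \<in> MM"
  show "weight M {} = 0" by (rule weight_empty)
  show "weight M (outcomes M) = 1" by (rule weight_total[OF qm[OF M]])
next
  fix M E F assume "M \<in> MM" "E \<subseteq> outcomes M \<and> F \<subseteq> outcomes M \<and> E \<inter> F = {}"
  then show "weight M (E \<union> F) = weight M E + weight M F" using add_disj by blast
next
  fix M N E F assume "M \<in> MM" "N \<in> MM" "E \<subseteq> outcomes M \<and> F \<subseteq> outcomes N"
  then show "(weight N F \<le> weight M E) = ge E M F N" using ge_iff by blast
qed

end

context setting begin

lemma uniq:
  assumes rep: "represents MM ge Pr"
    and M: "M \<in> MM" and E: "E \<subseteq> outcomes M"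
  shows "Pr E M = weight M E"
proof -
  have P0: "Pr {} N = 0" "Pr (outcomes N) N = 1" if "N \<in> MM" for N
    using rep that unfolding represents_def by auto
  have Padd: "Pr (A \<union> B) N = Pr A N + Pr B N"
    if "N \<in> MM" "A \<subseteq> outcomes N" "B \<subseteq> outcomes N" "A \<inter> B = {}" for N A B
    using rep that unfolding represents_def by blast
  have Pge: "Pr A N \<ge> Pr B K \<longleftrightarrow> ge A N B K"
    if "N \<in> MM" "K \<in> MM" "A \<subseteq> outcomes N" "B \<subseteq> outcomes K" for N K A B
    using rep that unfolding represents_def by blast
  have Pmono: "Pr B K \<le> Pr A N"
    if "N \<in> MM" "K \<in> MM" "A \<subseteq> outcomes N" "B \<subseteq> outcomes K" "weight K B \<le> weight N A" for N K A B
    using Pge[OF that(1-4)] ge_iff[OF that(1-4)] that(5) by blast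
  have Peq: "Pr B K = Pr A N"
    if "N \<in> MM" "K \<in> MM" "A \<subseteq> outcomes N" "B \<subseteq> outcomes K" "weight K B = weight N A" for N K A B
    using Pmono[OF that(1-4)] Pmono[OF that(2,1,4,3)] that(5) by force
  have U: "Pr A R = real k / real n"
    if kn: "1 \<le> n" "k \<le> n" and R: "R \<in> MM" "A \<subseteq> outcomes R" "weight R A = real k / real n"
    for n k :: nat and R A
  proof -
    define w :: "nat \<Rightarrow> real" where "w = (\<lambda>_. 1 / real n)"
    have wpos: "\<forall>i<n. 0 < w i" using kn by (simp add: w_def)
    have wsum: "(\<Sum>i<n. w i) = 1" using kn by (simp add: w_def)
    obtain U f where U: "U \<in> MM" "bij_betw f {..<n} (outcomes U)" "\<forall>i<n. weight U {f i} = w i"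
      using rich_get[OF wpos wsum] by blast
    have wU: "weight U (f ` I) = real (card I) / real n" if "I \<subseteq> {..<n}" for I
      using richR[OF U(1,2) wpos wsum U(3) that] by (simp add: w_def)
    have fsub: "f ` I \<subseteq> outcomes U" if "I \<subseteq> {..<n}" for I
      using U(2) that bij_betw_imp_surj_on by blast
    have inj: "inj_on f {..<n}" using U(2) bij_betw_def by blast
    define q where "q = Pr (f ` {0}) U"
    have n0: "0 < n" using kn by simp
    have single: "Pr (f ` {i}) U = q" if "i < n" for i
      unfolding q_def
      by (rule Peq[OF U(1) U(1) fsub fsub]) (use that n0 wU[of "{i}"] wU[of "{0}"] in auto)
    have card: "Pr (f ` I) U = real (card I) * q" if "I \<subseteq> {..<n}" for I
    proof -
      have "finite I" using that finite_subset by blast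
      then show ?thesis using that
      proof (induction I rule: finite_induct)
        case empty then show ?case using P0[OF U(1)] by simp
      next
        case (insert i I)
        have "f ` insert i I = f ` {i} \<union> f ` I" by auto
        moreover have "f ` {i} \<inter> f ` I = {}" using inj insert by (auto simp: inj_on_def)
        ultimately have "Pr (f ` insert i I) U = Pr (f ` {i}) U + Pr (f ` I) U"
          using Padd[OF U(1) fsub fsub, of "{i}" I] insert by auto
        then show ?case using insert single by (simp add: algebra_simps)
      qed
    qed
    have "Pr (f ` {..<n}) U = 1" using P0(2)[OF U(1)] U(2) by (simp add: bij_betw_def)
    then have q: "q = 1 / real n" using card[of "{..<n}"] n0 by (simp add: field_simps)
    have "Pr (f ` {..<k}) U = real k / real n" using card[of "{..<k}"] kn q by auto
    moreover have "Pr A R = Pr (f ` {..<k}) U"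
      by (rule Peq[OF U(1) R(1) fsub R(2)]) (use kn wU R(3) in auto)
    ultimately show ?thesis by simp
  qed
  define t where "t = weight M E"
  have t01: "0 \<le> t" "t \<le> 1" unfolding t_def using weight_nonneg'[OF M] weight_le1'[OF M E] by auto
  have bound: "t - 1 / real n \<le> Pr E M \<and> Pr E M \<le> t + 1 / real n" if n: "1 \<le> n" for n :: nat
  proof -
    define k where "k = nat \<lfloor>real n * t\<rfloor>"
    have nt0: "0 \<le> real n * t" using t01 by simp
    have rk: "real k = of_int \<lfloor>real n * t\<rfloor>" unfolding k_def using nt0 by simp
    have k1: "real k \<le> real n * t" "real n * t < real k + 1" unfolding rk
      using floor_correct[of "real n * t"] by auto
    have kn: "k \<le> n"
    proof -
      have "real k \<le> real n" using k1(1) t01 n by (metis mult_left_le of_nat_0_le_iff order_trans)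
      then show ?thesis by simp
    qed
    have npos: "real n > 0" using n by simp
    have lo: "t - 1 / real n \<le> Pr E M"
    proof -
      have a01: "0 \<le> real k / real n" "real k / real n \<le> 1" using kn npos by (auto simp: divide_le_eq)
      obtain R A B where R: "R \<in> MM" "A \<subseteq> B" "B \<subseteq> outcomes R" "weight R A = real k / real n"
        using nested[OF a01(1) order.refl a01(2)] by blast
      have A: "A \<subseteq> outcomes R" using R by blast
      have "Pr A R = real k / real n" by (rule U[OF n kn R(1) A R(4)])
      moreover have "real k / real n \<le> t" using k1(1) npos by (simp add: divide_le_eq mult.commute)
      then have "Pr A R \<le> Pr E M" by (intro Pmono[OF M R(1) E A]) (simp add: R(4) t_def)
      moreover have "t - 1 / real n \<le> real k / real n"
      proof -
        have "t * real n \<le> real k + 1" using k1(2) by (simp add: mult.commute)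
        then have "t \<le> (real k + 1) / real n" using npos by (simp add: le_divide_eq)
        moreover have "(real k + 1) / real n = real k / real n + 1 / real n" by (simp add: add_divide_distrib)
        ultimately show ?thesis by linarith
      qed
      ultimately show ?thesis by simp
    qed
    have hi: "Pr E M \<le> t + 1 / real n"
    proof (cases "k + 1 \<le> n")
      case True
      have a01: "0 \<le> real (k+1) / real n" "real (k+1) / real n \<le> 1" using True npos
        by (auto simp: divide_le_eq)
      obtain R A B where R: "R \<in> MM" "A \<subseteq> B" "B \<subseteq> outcomes R" "weight R A = real (k+1) / real n"
        using nested[OF a01(1) order.refl a01(2)] by blast
      have A: "A \<subseteq> outcomes R" using R by blast
      have "Pr A R = real (k+1) / real n" by (rule U[OF n True R(1) A R(4)])
      moreover have "t \<le> real (k+1) / real n" using k1(2) npos by (simp add: le_divide_eq mult.commute)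
      then have "Pr E M \<le> Pr A R" by (intro Pmono[OF R(1) M A E]) (simp add: R(4) t_def)
      moreover have "real (k+1) / real n \<le> t + 1 / real n"
      proof -
        have "real k \<le> t * real n" using k1(1) by (simp add: mult.commute)
        then have "real k / real n \<le> t" using npos by (simp add: divide_le_eq)
        moreover have "real (k + 1) / real n = real k / real n + 1 / real n" by (simp add: add_divide_distrib)
        ultimately show ?thesis by linarith
      qed
      ultimately show ?thesis by simp
    next
      case False
      then have "Pr E M \<le> Pr (outcomes M) M"
        by (intro Pmono[OF M M order.refl E]) (rule weight_mono[OF qm[OF M] E])
      then have "Pr E M \<le> 1" using P0(2)[OF M] by simp
      moreover have "0 \<le> 1 / real n" by simp
      moreover have "t = 1"
      proof -
        have "k = n" using False kn by simp
        then have "real n \<le> real n * t" using k1(1) by simp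
        then show ?thesis using t01 npos by (simp add: mult_le_cancel_left1)
      qed
      ultimately show ?thesis by linarith
    qed
    show ?thesis using lo hi by simp
  qed
  show ?thesis
  proof (rule ccontr)
    assume ne: "Pr E M \<noteq> weight M E"
    define d where "d = \<bar>Pr E M - t\<bar>"
    have d0: "d > 0" using ne unfolding d_def t_def by simp
    obtain n :: nat where n: "1 / d < real n" using reals_Archimedean2 by blast
    have n1: "1 \<le> n" using n d0
      by (metis divide_pos_pos less_one not_le of_nat_0 order_less_asym zero_less_one less_imp_le_nat)
    have "1 / real n < d" using n d0 n1 by (simp add: divide_less_eq mult.commute)
    moreover have "d \<le> 1 / real n" using bound[OF n1] unfolding d_def by (simp add: abs_le_iff)
    ultimately show False by simp
  qed
qed

end

theorem mainTheorem1:
  fixes MM :: "('h::{cinner_space,complete_space}, 's) qmeas set"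
    and ge :: "('h, 's) lordering"
  assumes "\<forall>M\<in>MM. quantum_measurement M"
    and "rich MM"
    and "minimally_rational MM ge"
    and "satisfies_equivalence MM ge"
  shows "uniquely_represents MM ge (\<lambda>E M. weight M E)"
proof -
  interpret setting MM ge using assms by (unfold_locales) auto
  show ?thesis unfolding uniquely_represents_def using repr uniq by blast
qed

end
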